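(* Let $p,q,p',q'\in\mathbb{R}^3$ satisfy $p^\mu+q^\mu=p'^\mu+q'^\mu$. If $\bar g<1$, then $q'^0\approx q^0$ and $p'^0\approx p^0$ with absolute implicit constants. In particular, if $2^{-k-1}\le\bar g\le 2^{-k}$ for some integer $k>0$, then $p^0\le\sqrt5\,p'^0$ and $p'^0\le\sqrt5\,p^0$.
   Context: For $p\in\mathbb{R}^3$, $p^0=\sqrt{1+|p|^2}$, $p^\mu=(p^0,p)$, $p^\mu q_\mu=-p^0q^0+p\cdot q$, and $\bar g=g(p'^\mu,p^\mu)=\sqrt{2(-p'^\mu p_\mu-1)}$. *)

theory Defs
  imports "HOL-Analysis.Analysis"
begin

text \<open>Energy p^0 = sqrt(1 + |p|^2) of a momentum p in R^3.\<close>
definition energy :: "real^3 \<Rightarrow> real" where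
  "energy p = sqrt (1 + (norm p)\<^sup>2)"

text \<open>Minkowski product p'^mu p_mu = - p'^0 p^0 + p' . p (signature -+++).\<close>
definition mink :: "real^3 \<Rightarrow> real^3 \<Rightarrow> real" where
  "mink p' p = - energy p' * energy p + p' \<bullet> p"

definition gbar :: "real^3 \<Rightarrow> real^3 \<Rightarrow> real" where
  "gbar p' p = sqrt (2 * (- mink p' p - 1))"

definition conserv :: "real^3 \<Rightarrow> real^3 \<Rightarrow> real^3 \<Rightarrow> real^3 \<Rightarrow> bool" where
  "conserv p q p' q' \<longleftrightarrow>
     energy p + energy q = energy p' + energy q' \<and> p + q = p' + q'"

end

theory Submission
  imports Defs
begin

lemma energy_sq: "(energy x)^2 = 1 + x \<bullet> x"
  unfolding energy_def by (simp add: power2_norm_eq_inner)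

lemma energy_ge1: "energy x \<ge> 1"
  unfolding energy_def by simp

lemma mink_sym: "mink x y = mink y x"
  unfolding mink_def by (simp add: inner_commute mult.commute)

lemma conserv_mink:
  assumes "conserv p q p' q'"
  shows "mink q' q = mink p' p"
proof -
  have e: "energy q' = energy p + energy q - energy p'" and v: "q' = p + q - p'"
    using assms unfolding conserv_def by (auto simp: algebra_simps)
  have sq: "(energy q')^2 = 1 + q' \<bullet> q'" by (rule energy_sq)
  have "(energy p + energy q - energy p')^2 = 1 + (p + q - p') \<bullet> (p + q - p')"
    using sq e v by simp
  then have h: "(energy p + energy q - energy p')^2 = 1 + p\<bullet>p + q\<bullet>q + p'\<bullet>p' + 2*(p\<bullet>q) - 2*(p\<bullet>p') - 2*(q\<bullet>p')"
    by (simp add: inner_simps inner_commute algebra_simps)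
  have a: "(energy p)^2 = 1 + p\<bullet>p" "(energy q)^2 = 1 + q\<bullet>q" "(energy p')^2 = 1 + p'\<bullet>p'"
    by (rule energy_sq)+
  have "mink q' q = - (energy p + energy q - energy p') * energy q + (p + q - p') \<bullet> q"
    unfolding mink_def e by (simp add: v)
  also have "\<dots> = - energy p * energy q - energy q * energy q + energy p' * energy q + p \<bullet> q + q \<bullet> q - p' \<bullet> q"
    by (simp add: inner_simps algebra_simps)
  finally show ?thesis unfolding mink_def
    using h a by (simp add: inner_simps inner_commute power2_eq_square algebra_simps)
qed

lemma core:
  assumes "- mink x y - 1 \<le> d" "0 \<le> d"
  shows "(energy x)^2 + (energy y)^2 \<le> 2*(1+d)*energy x*energy y \<or> energy x * energy y < 1+d"
proof -
  define a where "a = energy x"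
  define b where "b = energy y"
  define c where "c = 1 + d"
  have a2: "a^2 = 1 + (norm x)^2" unfolding a_def energy_def by simp
  have b2: "b^2 = 1 + (norm y)^2" unfolding b_def energy_def by simp
  have cs: "x \<bullet> y \<le> norm x * norm y" by (rule norm_cauchy_schwarz)
  have h: "a*b - norm x * norm y \<le> c"
    using assms(1) cs unfolding mink_def a_def b_def c_def by (simp add: mult.commute)
  show ?thesis
  proof (cases "a*b < c")
    case True then show ?thesis unfolding a_def b_def c_def by simp
  next
    case False
    then have nn: "0 \<le> a*b - c" by simp
    have le: "a*b - c \<le> norm x * norm y" using h by simp
    have "(a*b - c)^2 \<le> (norm x * norm y)^2"
        by (rule power_mono[OF le nn])
    also have "\<dots> = (a^2 - 1)*(b^2 - 1)" using a2 b2 by (simp add: power_mult_distrib)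
    finally have "(a*b-c)^2 \<le> (a^2 - 1)*(b^2 - 1)" .
    then have "a^2 + b^2 \<le> 2*a*b*c - c^2 + 1" by (simp add: power2_eq_square algebra_simps)
    moreover have "c^2 \<ge> 1" unfolding c_def using assms(2) by (simp add: power2_eq_square algebra_simps)
    ultimately have "a^2 + b^2 \<le> 2*c*a*b" by (simp add: algebra_simps)
    then show ?thesis unfolding a_def b_def c_def by simp
  qed
qed

lemma ratio3:
  assumes "- mink x y - 1 \<le> 1/2"
  shows "energy x \<le> 3 * energy y"
proof -
  have a: "energy x \<ge> 1" "energy y \<ge> 1" by (rule energy_ge1)+
  from core[OF assms] have "(energy x)^2 + (energy y)^2 \<le> 3*energy x*energy y \<or> energy x * energy y < 3/2"
    by simp
  then show ?thesis
  proof
    assume h: "(energy x)^2 + (energy y)^2 \<le> 3*energy x*energy y"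
    show ?thesis
    proof (rule ccontr)
      assume "\<not> ?thesis"
      then have "energy x - 3 * energy y > 0" by simp
      then have "energy x * (energy x - 3 * energy y) > 0" using a by simp
      moreover have "(energy y)^2 > 0" using a by simp
      ultimately show False using h by (simp add: power2_eq_square algebra_simps)
    qed
  next
    assume "energy x * energy y < 3/2"
    moreover have "energy x * 1 \<le> energy x * energy y" using a by (intro mult_left_mono) auto
    ultimately have "energy x * 1 < 3/2" by linarith
    then show ?thesis using a by simp
  qed
qed

lemma ratio2:
  assumes "- mink x y - 1 \<le> 1/8"
  shows "energy x \<le> 2 * energy y"
proof -
  have a: "energy x \<ge> 1" "energy y \<ge> 1" by (rule energy_ge1)+
  from core[OF assms] have "(energy x)^2 + (energy y)^2 \<le> (9/4)*energy x*energy y \<or> energy x * energy y < 9/8"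
    by simp
  then show ?thesis
  proof
    assume h: "(energy x)^2 + (energy y)^2 \<le> (9/4)*energy x*energy y"
    show ?thesis
    proof (rule ccontr)
      assume "\<not> ?thesis"
      then have "energy x - 2 * energy y > 0" "energy x - energy y / 4 > 0" using a by simp_all
      then have "(energy x - 2 * energy y) * (energy x - energy y / 4) > 0" by simp
      moreover have "(energy y)^2 > 0" using a by simp
      ultimately show False using h by (simp add: power2_eq_square algebra_simps)
    qed
  next
    assume "energy x * energy y < 9/8"
    moreover have "energy x * 1 \<le> energy x * energy y" using a by (intro mult_left_mono) auto
    ultimately have "energy x * 1 < 9/8" by linarith
    then show ?thesis using a by simp
  qed
qed

lemma sqrt_lt: "sqrt (2*u) < 1 \<Longrightarrow> u \<le> 1/2"
  by simp

lemma sqrt_le: "sqrt (2*u) \<le> 1/2 \<Longrightarrow> u \<le> 1/8"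
proof -
  assume h: "sqrt (2*u) \<le> 1/2"
  show "u \<le> 1/8"
  proof (cases "u \<ge> 0")
    case True
    have "(sqrt (2*u))^2 \<le> (1/2)^2" using h True by (intro power_mono) auto
    then show ?thesis using True by (simp add: power2_eq_square)
  qed simp
qed

theorem lemma3p5:
  shows "(\<exists>C>0. \<forall>p q p' q' :: real^3.
            conserv p q p' q' \<and> gbar p' p < 1 \<longrightarrow>
              energy q' \<le> C * energy q \<and> energy q \<le> C * energy q' \<and>
              energy p' \<le> C * energy p \<and> energy p \<le> C * energy p')
       \<and> (\<forall>p q p' q' :: real^3. \<forall>k::int.
            conserv p q p' q' \<and> k > 0 \<and>
            2 powr (- real_of_int k - 1) \<le> gbar p' p \<and> gbar p' p \<le> 2 powr (- real_of_int k)
            \<longrightarrow> energy p \<le> sqrt 5 * energy p' \<and> energy p' \<le> sqrt 5 * energy p)"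
proof (intro conjI)
  show "\<exists>C>0. \<forall>p q p' q' :: real^3.
            conserv p q p' q' \<and> gbar p' p < 1 \<longrightarrow>
              energy q' \<le> C * energy q \<and> energy q \<le> C * energy q' \<and>
              energy p' \<le> C * energy p \<and> energy p \<le> C * energy p'"
  proof (intro exI[of _ 3] conjI allI impI)
    fix p q p' q' :: "real^3"
    assume h: "conserv p q p' q' \<and> gbar p' p < 1"
    then have m: "- mink p' p - 1 \<le> 1/2" unfolding gbar_def using sqrt_lt by blast
    then have m2: "- mink p p' - 1 \<le> 1/2" by (simp add: mink_sym)
    have m3: "- mink q' q - 1 \<le> 1/2" using m conserv_mink[OF conjunct1[OF h]] by simp
    then have m4: "- mink q q' - 1 \<le> 1/2" by (simp add: mink_sym)
    show "energy q' \<le> 3 * energy q" by (rule ratio3[OF m3])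
    show "energy q \<le> 3 * energy q'" by (rule ratio3[OF m4])
    show "energy p' \<le> 3 * energy p" by (rule ratio3[OF m])
    show "energy p \<le> 3 * energy p'" by (rule ratio3[OF m2])
  qed simp
next
  show "\<forall>p q p' q' :: real^3. \<forall>k::int.
            conserv p q p' q' \<and> k > 0 \<and>
            2 powr (- real_of_int k - 1) \<le> gbar p' p \<and> gbar p' p \<le> 2 powr (- real_of_int k)
            \<longrightarrow> energy p \<le> sqrt 5 * energy p' \<and> energy p' \<le> sqrt 5 * energy p"
  proof (intro allI impI)
    fix p q p' q' :: "real^3" and k :: int
    assume h: "conserv p q p' q' \<and> k > 0 \<and>
            2 powr (- real_of_int k - 1) \<le> gbar p' p \<and> gbar p' p \<le> 2 powr (- real_of_int k)"
    have "2 powr (- real_of_int k) \<le> 2 powr (-1)" using h by (intro powr_mono) auto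
    then have "gbar p' p \<le> 1/2" using h by (simp add: powr_minus)
    then have m: "- mink p' p - 1 \<le> 1/8" unfolding gbar_def using sqrt_le by blast
    then have m2: "- mink p p' - 1 \<le> 1/8" by (simp add: mink_sym)
    have s: "2 \<le> sqrt (5::real)" by (simp add: real_le_rsqrt)
    have e: "energy p \<ge> 1" "energy p' \<ge> 1" by (rule energy_ge1)+
    have "energy p \<le> 2 * energy p'" by (rule ratio2[OF m2])
    also have "\<dots> \<le> sqrt 5 * energy p'" using s e by (intro mult_right_mono) auto
    finally have 1: "energy p \<le> sqrt 5 * energy p'" .
    have "energy p' \<le> 2 * energy p" by (rule ratio2[OF m])
    also have "\<dots> \<le> sqrt 5 * energy p" using s e by (intro mult_right_mono) auto
    finally show "energy p \<le> sqrt 5 * energy p' \<and> energy p' \<le> sqrt 5 * energy p" using 1 by simp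
  qed
qed

end
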